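(* Consider $\partial_t x = F_2 x^{\otimes 2}+F_1x+F_0$, and let $Q=I$ and pivot $s=x(0)$, so that $v(t)=x(t)-x(0)$ solves $\partial_tv=F_{2,s}v^{\otimes2}+F_{1,s}v+F_{0,s}$. Then $v(0)=0$, and there exists $t'>0$ such that $\|v(t)\|\le1$ for $t\le T\le t'$. In particular one may choose $t'=\frac{1}{\|F_{2,s}\|+\|F_{1,s}\|+\|F_{0,s}\|}$, and then for all $t<t'$, $$\|v(t)\|\le t\big(\|F_{2,s}\|+\|F_{1,s}\|+\|F_{0,s}\|\big)<1.$$
   Context: Setting: $x(t)\in\mathbb{R}^n$, $F_2\in\mathbb{R}^{n\times n^2}$, $F_1\in\mathbb{R}^{n\times n}$, $F_0\in\mathbb{R}^n$, Kronecker product $\otimes$; $F_{2,s}=F_2$, $F_{1,s}=F_1+F_2(s\otimes I_n+I_n\otimes s)$, $F_{0,s}=F_2s^{\otimes2}+F_1s+F_0$; $\|\cdot\|$ is the Euclidean norm / induced operator norm; $t\ge0$. *)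

theory Defs
  imports "HOL-Analysis.Analysis"
begin

text \<open>Kronecker product of two vectors in R^n: (u \<otimes> w) indexed by pairs (a,b),
  entry u_a * w_b. Vectors in R^(n^2) are modelled as real^('n \<times> 'n).\<close>
definition kron :: "real^'n \<Rightarrow> real^'n \<Rightarrow> real^('n \<times> 'n)" where
  "kron u w = (\<chi> p. u $ fst p * w $ snd p)"

text \<open>The n^2 x n matrix (s \<otimes> I_n + I_n \<otimes> s): column k, row (a,b) has entry
  s_a [b=k] + [a=k] s_b, so that it maps v to s \<otimes> v + v \<otimes> s.\<close>
definition kron_sym_mat :: "real^'n \<Rightarrow> real^'n^('n \<times> 'n)" where
  "kron_sym_mat s = (\<chi> p k. s $ fst p * (if snd p = k then 1 else 0)
                            + (if fst p = k then 1 else 0) * s $ snd p)"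

definition F2s :: "real^('n \<times> 'n)^'n \<Rightarrow> real^'n \<Rightarrow> real^('n \<times> 'n)^'n" where
  "F2s F2 s = F2"

definition F1s :: "real^('n \<times> 'n)^'n \<Rightarrow> real^'n^'n \<Rightarrow> real^'n \<Rightarrow> real^'n^'n" where
  "F1s F2 F1 s = F1 + F2 ** kron_sym_mat s"

definition F0s :: "real^('n \<times> 'n)^'n \<Rightarrow> real^'n^'n \<Rightarrow> real^'n \<Rightarrow> real^'n \<Rightarrow> real^'n" where
  "F0s F2 F1 F0 s = F2 *v kron s s + F1 *v s + F0"

definition opnorm :: "real^'m^'k \<Rightarrow> real" where
  "opnorm A = onorm (\<lambda>v. A *v v)"

end

theory Submission
  imports Defs
begin

lemma kron_norm: "norm (kron u w) = norm u * norm (w::real^'n)"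
proof -
  have "(norm (kron u w))^2 = (norm u * norm w)^2"
  proof -
    have "(norm (kron u w))^2 = (\<Sum>p\<in>UNIV. (u $ fst p * w $ snd p)^2)"
      unfolding power2_norm_eq_inner by (simp add: inner_vec_def kron_def power2_eq_square)
    also have "\<dots> = (\<Sum>p\<in>UNIV \<times> UNIV. (u $ fst p * w $ snd p)^2)" by simp
    also have "\<dots> = (\<Sum>a\<in>UNIV. \<Sum>b\<in>UNIV. (u $ a * w $ b)^2)"
      unfolding sum.cartesian_product by (simp add: case_prod_beta)
    also have "\<dots> = (\<Sum>a\<in>UNIV. \<Sum>b\<in>UNIV. (u $ a)^2 * (w $ b)^2)"
      by (simp add: power_mult_distrib)
    also have "\<dots> = (\<Sum>a\<in>UNIV. (u $ a)^2) * (\<Sum>b\<in>UNIV. (w $ b)^2)"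
      by (simp add: sum_product)
    also have "\<dots> = (norm u * norm w)^2"
      unfolding power_mult_distrib power2_norm_eq_inner by (simp add: inner_vec_def power2_eq_square)
    finally show ?thesis .
  qed
  then show ?thesis by (simp add: power2_eq_iff_nonneg)
qed

lemma kron_sym: "kron_sym_mat s *v w = kron s w + kron w (s::real^'n)"
proof -
  have "(\<Sum>j\<in>UNIV. (s $ a * (if b = j then 1 else 0) + (if a = j then 1 else 0) * s $ b) * w $ j)
        = s $ a * w $ b + w $ a * s $ b" for a b
  proof -
    have "(\<Sum>j\<in>UNIV. (s $ a * (if b = j then 1 else 0) + (if a = j then 1 else 0) * s $ b) * w $ j)
       = (\<Sum>j\<in>UNIV. (if b = j then s $ a * w $ j else 0) + (if a = j then s $ b * w $ j else 0))"
      by (rule sum.cong) auto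
    also have "\<dots> = s $ a * w $ b + w $ a * s $ b"
      by (simp add: sum.distrib)
    finally show ?thesis .
  qed
  then show ?thesis
    by (simp add: vec_eq_iff kron_sym_mat_def kron_def matrix_vector_mult_def)
qed

lemma kron_expand: "kron (w + s) (w + s) = kron w w + (kron s w + kron w s) + kron s (s::real^'n)"
  by (simp add: vec_eq_iff kron_def algebra_simps)

lemma rhs_eq:
  "F2 *v kron (w + s) (w + s) + F1 *v (w + s) + F0
   = F2s F2 s *v kron w w + F1s F2 F1 s *v w + F0s F2 F1 F0 s"
  by (simp add: F2s_def F1s_def F0s_def kron_expand kron_sym matrix_vector_right_distrib
      matrix_vector_mult_add_rdistrib matrix_vector_mul_assoc[symmetric] algebra_simps)

lemma opnorm_bound: "norm (A *v w) \<le> opnorm A * norm w"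
  unfolding opnorm_def by (rule onorm) simp

lemma opnorm_nonneg: "0 \<le> opnorm A"
  unfolding opnorm_def by (rule onorm_pos_le) simp

lemma rhs_bound:
  assumes "norm (w::real^'n) \<le> 1"
  shows "norm (F2s F2 s *v kron w w + F1s F2 F1 s *v w + F0s F2 F1 F0 s)
     \<le> opnorm (F2s F2 s) + opnorm (F1s F2 F1 s) + norm (F0s F2 F1 F0 s)"
proof -
  have n0: "0 \<le> norm w" by simp
  have "norm (F2s F2 s *v kron w w) \<le> opnorm (F2s F2 s) * (norm w * norm w)"
    using opnorm_bound[of "F2s F2 s" "kron w w"] by (simp add: kron_norm)
  also have "\<dots> \<le> opnorm (F2s F2 s)"
    using assms n0 opnorm_nonneg[of "F2s F2 s"]
    by (metis mult_le_one mult_left_le mult_nonneg_nonneg)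
  finally have a: "norm (F2s F2 s *v kron w w) \<le> opnorm (F2s F2 s)" .
  have "norm (F1s F2 F1 s *v w) \<le> opnorm (F1s F2 F1 s) * norm w" by (rule opnorm_bound)
  also have "\<dots> \<le> opnorm (F1s F2 F1 s)"
    using assms n0 opnorm_nonneg[of "F1s F2 F1 s"] by (metis mult_left_le)
  finally have b: "norm (F1s F2 F1 s *v w) \<le> opnorm (F1s F2 F1 s)" .
  show ?thesis using a b norm_triangle_ineq[of "F2s F2 s *v kron w w + F1s F2 F1 s *v w" "F0s F2 F1 F0 s"]
      norm_triangle_ineq[of "F2s F2 s *v kron w w" "F1s F2 F1 s *v w"] by linarith
qed

lemma mvt_bound:
  fixes v :: "real \<Rightarrow> real^'n"
  assumes "\<And>t. t \<in> {0..b} \<Longrightarrow> (v has_vector_derivative v' t) (at t within {0..b})"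
    and "\<And>t. t \<in> {0..b} \<Longrightarrow> norm (v' t) \<le> B" and "0 \<le> b"
  shows "norm (v b - v 0) \<le> B * b"
proof -
  have "norm (v b - v 0) \<le> B * norm (b - 0)"
  proof (rule differentiable_bound[where f' = "\<lambda>t h. h *\<^sub>R v' t"])
    show "convex {0..b}" by simp
    show "\<And>x. x \<in> {0..b} \<Longrightarrow> (v has_derivative (\<lambda>h. h *\<^sub>R v' x)) (at x within {0..b})"
      using assms(1) by (simp add: has_vector_derivative_def)
    fix x assume "x \<in> {0..b}"
    have "onorm (\<lambda>h. h *\<^sub>R v' x) = onorm (\<lambda>h::real. h) * norm (v' x)"
      by (rule onorm_scaleR_left) simp
    also have "\<dots> = norm (v' x)" using onorm_id[where 'a=real] by simp
    finally show "onorm (\<lambda>h. h *\<^sub>R v' x) \<le> B" using assms(2) \<open>x \<in> {0..b}\<close> by simp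
  qed (use assms in auto)
  then show ?thesis using assms(3) by simp
qed

theorem lemma9:
  fixes x :: "real \<Rightarrow> real^'n"
    and F2 :: "real^('n \<times> 'n)^'n" and F1 :: "real^'n^'n" and F0 :: "real^'n"
    and T :: real
  assumes ode: "\<And>t. t \<in> {0..T} \<Longrightarrow>
      (x has_vector_derivative (F2 *v kron (x t) (x t) + F1 *v x t + F0)) (at t within {0..T})"
  defines "s \<equiv> x 0"
    and "v \<equiv> (\<lambda>t. x t - x 0)"
    and "S \<equiv> opnorm (F2s F2 (x 0)) + opnorm (F1s F2 F1 (x 0)) + norm (F0s F2 F1 F0 (x 0))"
  shows "(\<forall>t\<in>{0..T}. (v has_vector_derivative
             (F2s F2 s *v kron (v t) (v t) + F1s F2 F1 s *v v t + F0s F2 F1 F0 s)) (at t within {0..T}))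
       \<and> v 0 = 0
       \<and> (\<exists>t'>0. \<forall>t\<in>{0..T}. t \<le> t' \<longrightarrow> norm (v t) \<le> 1)
       \<and> (\<forall>t\<in>{0..T}. t < 1 / S \<longrightarrow> norm (v t) \<le> t * S \<and> t * S < 1)"
proof -
  define D where "D t = F2s F2 s *v kron (v t) (v t) + F1s F2 F1 s *v v t + F0s F2 F1 F0 s" for t
  have xv: "x t = v t + s" for t by (simp add: v_def s_def)
  have der: "(v has_vector_derivative D t) (at t within {0..T})" if "t \<in> {0..T}" for t
  proof -
    have "(v has_vector_derivative (F2 *v kron (x t) (x t) + F1 *v x t + F0) - 0) (at t within {0..T})"
      unfolding v_def by (intro has_vector_derivative_diff ode that has_vector_derivative_const)
    then show ?thesis unfolding D_def using rhs_eq[of F2 "v t" s F1 F0] by (simp add: xv)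
  qed
  have v0: "v 0 = 0" by (simp add: v_def)
  have cont: "continuous_on {0..T} v"
    using der by (metis has_vector_derivative_continuous continuous_on_eq_continuous_within)
  have P3: "\<exists>t'>0. \<forall>t\<in>{0..T}. t \<le> t' \<longrightarrow> norm (v t) \<le> 1"
  proof (cases "0 \<le> T")
    case True
    then have "continuous (at 0 within {0..T}) v" using cont
      by (simp add: continuous_on_eq_continuous_within)
    then obtain d where d: "d > 0" "\<And>y. y \<in> {0..T} \<Longrightarrow> dist y 0 < d \<Longrightarrow> dist (v y) (v 0) < 1"
      unfolding continuous_within_eps_delta by (metis zero_less_one)
    show ?thesis
    proof (intro exI[of _ "d/2"] conjI ballI impI)
      fix t assume "t \<in> {0..T}" "t \<le> d/2"
      then show "norm (v t) \<le> 1" using d(1) d(2)[of t] by (simp add: v0 dist_norm)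
    qed (use d in simp)
  next
    case False
    then show ?thesis by (intro exI[of _ 1]) auto
  qed
  have Sdef: "S = opnorm (F2s F2 s) + opnorm (F1s F2 F1 s) + norm (F0s F2 F1 F0 s)"
    by (simp add: S_def s_def)
  have Dbound: "norm (D t) \<le> S" if "norm (v t) \<le> 1" for t
    unfolding D_def Sdef by (rule rhs_bound[OF that])
  have P4: "norm (v t) \<le> t * S \<and> t * S < 1" if t: "t \<in> {0..T}" "t < 1 / S" for t
  proof -
    have "S \<ge> 0" unfolding Sdef by (intro add_nonneg_nonneg opnorm_nonneg norm_ge_zero)
    moreover have "S \<noteq> 0" using t by auto
    ultimately have Spos: "S > 0" by simp
    have tS: "t * S < 1" using t Spos by (simp add: field_simps)
    have mvt: "norm (v b) \<le> S * b"
      if b: "0 \<le> b" "b \<le> t" and nb: "\<And>\<tau>. \<tau> \<in> {0..b} \<Longrightarrow> norm (v \<tau>) \<le> 1" for b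
    proof -
      have "norm (v b - v 0) \<le> S * b"
      proof (rule mvt_bound[where v' = D])
        fix \<tau> assume "\<tau> \<in> {0..b}"
        then show "(v has_vector_derivative D \<tau>) (at \<tau> within {0..b})"
          using der[of \<tau>] b t by (auto intro: has_vector_derivative_within_subset)
        show "norm (D \<tau>) \<le> S" using nb \<open>\<tau> \<in> {0..b}\<close> Dbound by blast
      qed (use b in auto)
      then show ?thesis by (simp add: v0)
    qed
    have all1: "\<forall>\<sigma>\<in>{0..t}. norm (v \<sigma>) < 1"
    proof (rule ccontr)
      assume neg: "\<not> (\<forall>\<sigma>\<in>{0..t}. norm (v \<sigma>) < 1)"
      define B where "B = {0..t} \<inter> (\<lambda>\<sigma>. norm (v \<sigma>)) -` {1..}"
      have Bne: "B \<noteq> {}" using neg by (auto simp: B_def not_less)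
      have contt: "continuous_on {0..t} (\<lambda>\<sigma>. norm (v \<sigma>))"
        by (intro continuous_on_norm continuous_on_subset[OF cont]) (use t in auto)
      have Bcl: "closed B" unfolding B_def
        by (rule continuous_closed_preimage[OF contt]) auto
      have Bbdd: "bdd_below B" by (auto simp: B_def bdd_below_def)
      define s0 where "s0 = Inf B"
      have s0B: "s0 \<in> B" unfolding s0_def by (rule closed_contains_Inf[OF Bne Bbdd Bcl])
      then have s0: "0 \<le> s0" "s0 \<le> t" "1 \<le> norm (v s0)" by (auto simp: B_def)
      have s0pos: "0 < s0" using s0 v0 by (cases "s0 = 0") auto
      have below: "norm (v \<tau>) < 1" if "\<tau> \<in> {0..<s0}" for \<tau>
      proof (rule ccontr)
        assume "\<not> norm (v \<tau>) < 1"
        then have "\<tau> \<in> B" using that s0 by (auto simp: B_def)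
        then have "s0 \<le> \<tau>" unfolding s0_def using Bbdd by (rule cInf_lower)
        then show False using that by auto
      qed
      define C where "C = {0..s0} \<inter> (\<lambda>\<sigma>. norm (v \<sigma>)) -` {..1}"
      have Ccl: "closed C" unfolding C_def
        by (rule continuous_closed_preimage[OF continuous_on_subset[OF contt]]) (use s0 in auto)
      have "{0..<s0} \<subseteq> C" using below by (auto simp: C_def less_imp_le)
      then have "closure {0..<s0} \<subseteq> C" using Ccl by (rule closure_minimal)
      then have "{0..s0} \<subseteq> C" using s0pos by simp
      then have "\<And>\<tau>. \<tau> \<in> {0..s0} \<Longrightarrow> norm (v \<tau>) \<le> 1" by (auto simp: C_def)
      then have "norm (v s0) \<le> S * s0" using mvt s0 by blast
      also have "\<dots> \<le> S * t" using s0 Spos by simp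
      finally show False using tS s0 by (simp add: mult.commute)
    qed
    have "norm (v t) \<le> S * t" using mvt[of t] all1 t by (auto simp: less_imp_le)
    then show ?thesis using tS by (simp add: mult.commute)
  qed
  show ?thesis using der v0 P3 P4 unfolding D_def by blast
qed

end
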